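(* Let $V$ be a finite-dimensional space of $k$-forms on $T^n$ and let $\{E_{F,F'}:F\subseteq F'\subseteq T^n\}$ be a consistent family of extension operators. For $0\le d\le n$ let $$W_d:=\bigoplus_{F\subseteq T^n,\ \dim F=d}E_{F,T^n}\mathring V(F).$$ Then $V_d=W_d\oplus V_{d+1}$ for each $d$, where $V_d$ is the subspace of forms in $V$ whose traces vanish on all $(d-1)$-dimensional faces of $T^n$.
   Context: $T^n\subset\mathbb R^{n+1}$ is the standard simplex $\{\lambda_i\ge0,\ \sum\lambda_i=1\}$. For a face $F$, $V(F)=\mathrm{tr}_{T^n,F}(V)$, where $\mathrm{tr}_{F',F}$ denotes pullback of forms from a face $F'$ to a subface $F$; $\mathring V(F)$ is the subspace of $V(F)$ of forms with vanishing trace on $\partial F$. $V_0=V$, $V_{n+1}=0$. For faces $K\subseteq F$, a linear map $E_{K,F}:V(K)\to V(F)$ is an extension operator if $\mathrm{tr}_{F,K}E_{K,F}\alpha=\alpha$ for all $\alpha\in V(K)$. A family of extension operators $\{E_{F,F'}\}$ is consistent if for any subfaces $F,F'$ of a face $H$, with $K=F\cap F'$, one has $\mathrm{tr}_{H,F'}\circ E_{F,H}=E_{K,F'}\circ\mathrm{tr}_{F,K}$ on $V(F)$. (Part of the claim is that the sum defining $W_d$ is direct.) *)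

theory Defs
  imports Complex_Main "HOL-Library.Function_Algebras"
begin

text \<open>Points and tangent vectors of \<open>\<real>\<^sup>n\<^sup>+\<^sup>1\<close> are functions \<open>nat \<Rightarrow> real\<close> (coordinates
  \<open>\<lambda>\<^sub>0,...,\<lambda>\<^sub>n\<close>, the remaining ones being 0).  A face of \<open>T\<^sup>n\<close> is given by its vertex set
  \<open>S \<subseteq> {..n}\<close> (dimension \<open>card S - 1\<close>); \<open>S = {}\<close> is the empty face.\<close>

type_synonym form = "(nat \<Rightarrow> real) \<Rightarrow> (nat \<Rightarrow> real) list \<Rightarrow> real"

definition face_pts :: "nat set \<Rightarrow> (nat \<Rightarrow> real) set" where
  "face_pts S = {x. (\<forall>i. i \<notin> S \<longrightarrow> x i = 0) \<and> (\<forall>i\<in>S. 0 \<le> x i) \<and> (\<Sum>i\<in>S. x i) = 1}"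

definition tangent :: "nat set \<Rightarrow> (nat \<Rightarrow> real) set" where
  "tangent S = {v. (\<forall>i. i \<notin> S \<longrightarrow> v i = 0) \<and> (\<Sum>i\<in>S. v i) = 0}"

text \<open>A (not necessarily smooth) differential k-form on the face S: at each point of the face an
  alternating k-linear form on the tangent space of the face; normalised to be 0 elsewhere.\<close>
definition is_kform :: "nat \<Rightarrow> nat set \<Rightarrow> form \<Rightarrow> bool" where
  "is_kform k S \<omega> \<longleftrightarrow>
     (\<forall>x vs. x \<notin> face_pts S \<or> length vs \<noteq> k \<or> \<not> set vs \<subseteq> tangent S \<longrightarrow> \<omega> x vs = 0) \<and>
     (\<forall>x\<in>face_pts S.
        (\<forall>as bs v w c. length as + length bs + 1 = k \<longrightarrow> set (as @ bs) \<subseteq> tangent S \<longrightarrow>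
            v \<in> tangent S \<longrightarrow> w \<in> tangent S \<longrightarrow>
            \<omega> x (as @ (\<lambda>j. c * v j + w j) # bs) = c * \<omega> x (as @ v # bs) + \<omega> x (as @ w # bs)) \<and>
        (\<forall>vs. length vs = k \<longrightarrow> set vs \<subseteq> tangent S \<longrightarrow> \<not> distinct vs \<longrightarrow> \<omega> x vs = 0))"

definition fscale :: "real \<Rightarrow> form \<Rightarrow> form" where
  "fscale c \<omega> = (\<lambda>x vs. c * \<omega> x vs)"

text \<open>Since forms on a face
  are normalised to vanish off that face, \<open>tr\<^sub>F\<^sub>',\<^sub>F\<close> does not depend on \<open>F'\<close>.\<close>
definition tr :: "nat set \<Rightarrow> form \<Rightarrow> form" where
  "tr F \<omega> = (\<lambda>x vs. if x \<in> face_pts F \<and> set vs \<subseteq> tangent F then \<omega> x vs else 0)"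

definition is_fin_dim_space :: "form set \<Rightarrow> bool" where
  "is_fin_dim_space V \<longleftrightarrow> 0 \<in> V \<and> (\<forall>a\<in>V. \<forall>b\<in>V. a + b \<in> V) \<and> (\<forall>c. \<forall>a\<in>V. fscale c a \<in> V) \<and>
     (\<exists>B. finite B \<and> B \<subseteq> V \<and> V = {\<Sum>b\<in>B. fscale (u b) b | u. True})"

definition Vf :: "form set \<Rightarrow> nat set \<Rightarrow> form set" where
  "Vf V F = tr F ` V"

definition Vring :: "form set \<Rightarrow> nat set \<Rightarrow> form set" where
  "Vring V F = {\<beta> \<in> Vf V F. \<forall>G. G \<subset> F \<longrightarrow> tr G \<beta> = 0}"

text \<open>\<open>V\<^sub>d\<close>: forms whose traces vanish on all (d-1)-dimensional faces (= d vertices).\<close>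
definition Vsub :: "nat \<Rightarrow> form set \<Rightarrow> nat \<Rightarrow> form set" where
  "Vsub n V d = {\<alpha> \<in> V. \<forall>F. F \<subseteq> {..n} \<and> card F = d \<longrightarrow> tr F \<alpha> = 0}"

definition faces_of_dim :: "nat \<Rightarrow> nat \<Rightarrow> nat set set" where
  "faces_of_dim n d = {F. F \<subseteq> {..n} \<and> card F = d + 1}"

definition Wsub :: "nat \<Rightarrow> form set \<Rightarrow> (nat set \<Rightarrow> nat set \<Rightarrow> form \<Rightarrow> form) \<Rightarrow> nat \<Rightarrow> form set" where
  "Wsub n V E d = {\<Sum>F\<in>faces_of_dim n d. E F {..n} (\<beta> F) | \<beta>.
                     \<forall>F\<in>faces_of_dim n d. \<beta> F \<in> Vring V F}"

definition is_extension_family :: "nat \<Rightarrow> form set \<Rightarrow> (nat set \<Rightarrow> nat set \<Rightarrow> form \<Rightarrow> form) \<Rightarrow> bool" where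
  "is_extension_family n V E \<longleftrightarrow>
     (\<forall>K F. K \<subseteq> F \<and> F \<subseteq> {..n} \<longrightarrow>
        (\<forall>\<alpha>\<in>Vf V K. E K F \<alpha> \<in> Vf V F \<and> tr K (E K F \<alpha>) = \<alpha>) \<and>
        (\<forall>\<alpha>\<in>Vf V K. \<forall>\<beta>\<in>Vf V K. E K F (\<alpha> + \<beta>) = E K F \<alpha> + E K F \<beta>) \<and>
        (\<forall>c. \<forall>\<alpha>\<in>Vf V K. E K F (fscale c \<alpha>) = fscale c (E K F \<alpha>)))"

definition is_consistent :: "nat \<Rightarrow> form set \<Rightarrow> (nat set \<Rightarrow> nat set \<Rightarrow> form \<Rightarrow> form) \<Rightarrow> bool" where
  "is_consistent n V E \<longleftrightarrow>
     (\<forall>F F' H. F \<subseteq> H \<and> F' \<subseteq> H \<and> H \<subseteq> {..n} \<longrightarrow>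
        (\<forall>\<alpha>\<in>Vf V F. tr F' (E F H \<alpha>) = E (F \<inter> F') F' (tr (F \<inter> F') \<alpha>)))"

end

theory Submission
  imports Defs
begin

lemma tr_add: "tr G (a + b) = tr G a + tr G b"
  by (auto simp: tr_def fun_eq_iff)

lemma tr_zero: "tr G 0 = 0"
  by (auto simp: tr_def fun_eq_iff)

lemma tr_diff: "tr G (a - b) = tr G a - tr G b"
  by (auto simp: tr_def fun_eq_iff)

lemma tr_sum: "tr G (sum f A) = (\<Sum>x\<in>A. tr G (f x))"
proof (induction A rule: infinite_finite_induct)
  case (infinite A)
  then show ?case by (metis sum.infinite tr_zero)
next
  case empty
  then show ?case by (metis sum.empty tr_zero)
next
  case (insert x F)
  then show ?case by (metis sum.insert tr_add)
qed

lemma face_pts_mono: assumes "G \<subseteq> F" "finite F" shows "face_pts G \<subseteq> face_pts F"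
proof
  fix x assume x: "x \<in> face_pts G"
  have "(\<Sum>i\<in>F. x i) = (\<Sum>i\<in>G. x i)"
    using x assms by (intro sum.mono_neutral_right) (auto simp: face_pts_def)
  then show "x \<in> face_pts F" using x assms unfolding face_pts_def by auto
qed

lemma tangent_mono: assumes "G \<subseteq> F" "finite F" shows "tangent G \<subseteq> tangent F"
proof
  fix x assume x: "x \<in> tangent G"
  have "(\<Sum>i\<in>F. x i) = (\<Sum>i\<in>G. x i)"
    using x assms by (intro sum.mono_neutral_right) (auto simp: tangent_def)
  then show "x \<in> tangent F" using x assms unfolding tangent_def by auto
qed

lemma tr_tr: assumes "G \<subseteq> F" "finite F" shows "tr G (tr F a) = tr G a"
  using face_pts_mono[OF assms] tangent_mono[OF assms]
  by (auto simp: tr_def fun_eq_iff)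

lemma tr_kform: "is_kform k T w \<Longrightarrow> tr T w = w"
  unfolding is_kform_def tr_def fun_eq_iff by metis

lemma fscale_m1: "fscale (-1) w = - w"
  by (auto simp: fscale_def fun_eq_iff)

lemma fscale_0: "fscale 0 w = 0"
  by (auto simp: fscale_def fun_eq_iff)

lemma extV0: "is_extension_family n V E \<Longrightarrow> K \<subseteq> F \<Longrightarrow> F \<subseteq> {..n} \<Longrightarrow> a \<in> Vf V K \<Longrightarrow> E K F a \<in> Vf V F \<and> tr K (E K F a) = a"
  unfolding is_extension_family_def by (metis (no_types, lifting))
lemma extS0: "is_extension_family n V E \<Longrightarrow> K \<subseteq> F \<Longrightarrow> F \<subseteq> {..n} \<Longrightarrow> a \<in> Vf V K \<Longrightarrow> E K F (fscale c a) = fscale c (E K F a)"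
  unfolding is_extension_family_def by (metis (no_types, lifting))
lemma cons0: "is_consistent n V E \<Longrightarrow> F \<subseteq> {..n} \<Longrightarrow> G \<subseteq> {..n} \<Longrightarrow> a \<in> Vf V F \<Longrightarrow> tr G (E F {..n} a) = E (F \<inter> G) G (tr (F \<inter> G) a)"
  unfolding is_consistent_def by (metis (no_types, lifting) order_refl)

theorem propositionA2:
  fixes n k d :: nat and V :: "form set" and E :: "nat set \<Rightarrow> nat set \<Rightarrow> form \<Rightarrow> form"
  assumes "is_fin_dim_space V"
    and "\<forall>\<omega>\<in>V. is_kform k {..n} \<omega>"
    and "is_extension_family n V E"
    and "is_consistent n V E"
    and "d \<le> n"
  shows "Vsub n V d = {w + u | w u. w \<in> Wsub n V E d \<and> u \<in> Vsub n V (d + 1)}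
    \<and> (\<forall>\<beta> u. (\<forall>F\<in>faces_of_dim n d. \<beta> F \<in> Vring V F) \<longrightarrow> u \<in> Vsub n V (d + 1) \<longrightarrow>
          (\<Sum>F\<in>faces_of_dim n d. E F {..n} (\<beta> F)) + u = 0 \<longrightarrow>
          (\<forall>F\<in>faces_of_dim n d. E F {..n} (\<beta> F) = 0) \<and> u = 0)"
proof -
  define T where "T = {..n}"
  note fd = assms(1)[unfolded is_fin_dim_space_def]
  have V0: "0 \<in> V" and Vadd: "\<And>a b. a \<in> V \<Longrightarrow> b \<in> V \<Longrightarrow> a + b \<in> V"
    and Vsc: "\<And>c a. a \<in> V \<Longrightarrow> fscale c a \<in> V" using fd by auto
  have Vneg: "a \<in> V \<Longrightarrow> - a \<in> V" for a using Vsc[of a "-1"] by (metis fscale_m1)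
  have Vdiff: "a \<in> V \<Longrightarrow> b \<in> V \<Longrightarrow> a - b \<in> V" for a b
    using Vadd[OF _ Vneg] by (metis diff_conv_add_uminus)
  have Vsum: "(\<And>x. x \<in> A \<Longrightarrow> f x \<in> V) \<Longrightarrow> sum f A \<in> V" for f and A :: "nat set set"
    by (induction A rule: infinite_finite_induct) (auto simp: V0 Vadd)
  have VT: "Vf V T = V"
  proof -
    have "tr T ` V = id ` V" using assms(2) tr_kform unfolding T_def
      by (intro image_cong) auto
    then show ?thesis by (simp add: Vf_def)
  qed
  have fin: "finite F" if "F \<subseteq> T" for F using that finite_subset unfolding T_def by blast
  have cardT: "card T = n + 1" unfolding T_def by simp
  have fT: "finite T" unfolding T_def by simp
  have extV: "E K F a \<in> Vf V F" if "K \<subseteq> F" "F \<subseteq> T" "a \<in> Vf V K" for K F a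
    using extV0[OF assms(3)] that unfolding T_def by blast
  have extT: "tr K (E K F a) = a" if "K \<subseteq> F" "F \<subseteq> T" "a \<in> Vf V K" for K F a
    using extV0[OF assms(3)] that unfolding T_def by blast
  have extS: "E K F (fscale c a) = fscale c (E K F a)" if "K \<subseteq> F" "F \<subseteq> T" "a \<in> Vf V K" for K F a c
    using extS0[OF assms(3)] that unfolding T_def by blast
  have cons: "tr G (E F T a) = E (F \<inter> G) G (tr (F \<inter> G) a)" if "F \<subseteq> T" "G \<subseteq> T" "a \<in> Vf V F" for F G a
    using cons0[OF assms(4)] that unfolding T_def by blast
  have finfd: "finite (faces_of_dim n d)"
    by (rule finite_subset[of _ "Pow {..n}"]) (auto simp: faces_of_dim_def)
  have E0: "E K F 0 = 0" if "K \<subseteq> F" "F \<subseteq> T" for K F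
  proof -
    have "0 \<in> Vf V K" unfolding Vf_def using V0 tr_zero by (metis image_eqI)
    then have "E K F (fscale 0 0) = fscale 0 (E K F 0)" using extS that by blast
    then show ?thesis by (simp add: fscale_0)
  qed
  have vanish: "tr G a = 0" if vs: "a \<in> Vsub n V m" "m \<le> n + 1" "G \<subseteq> T" "card G \<le> m" for a m G
  proof -
    obtain G' where G': "G \<subseteq> G'" "G' \<subseteq> T" "card G' = m"
      using exists_subset_between[of G m T] vs cardT fT by auto
    have "tr G' a = 0" using vs(1) G' unfolding Vsub_def T_def by auto
    then show ?thesis using tr_tr[OF G'(1) fin[OF G'(2)], of a] by (metis tr_zero)
  qed
  have faceT: "F \<subseteq> T" "card F = d + 1" if "F \<in> faces_of_dim n d" for F
    using that unfolding faces_of_dim_def T_def by auto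
  have key: "tr G (E F T b) = (if F = G then b else 0)"
    if "F \<in> faces_of_dim n d" "G \<subseteq> T" "card G \<le> d + 1" "b \<in> Vring V F" for F G b
  proof (cases "F = G")
    case True
    have "b \<in> Vf V F" using that(4) unfolding Vring_def by auto
    then show ?thesis using True extT[of F T] faceT[OF that(1)] by auto
  next
    case False
    have bF: "b \<in> Vf V F" using that(4) unfolding Vring_def by auto
    have "F \<inter> G \<subset> F"
    proof
      show "F \<inter> G \<subseteq> F" by auto
      show "F \<inter> G \<noteq> F"
      proof
        assume "F \<inter> G = F"
        then have "F \<subseteq> G" by auto
        moreover have "card G \<le> card F" using that faceT by auto
        ultimately have "F = G" using card_seteq[OF fin[OF that(2)]] by blast
        with False show False by simp
      qed
    qed
    then have "tr (F \<inter> G) b = 0" using that(4) unfolding Vring_def by auto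
    moreover have "tr G (E F T b) = E (F \<inter> G) G (tr (F \<inter> G) b)"
      using cons[of F G b] faceT[OF that(1)] that(2) bF by blast
    ultimately show ?thesis using False E0[of "F \<inter> G" G] that(2) by auto
  qed
  have EinV: "E F T b \<in> V" if "F \<in> faces_of_dim n d" "b \<in> Vring V F" for F b
    using extV[of F T] faceT[OF that(1)] that(2) VT unfolding Vring_def by auto
  have trsumE: "tr G (\<Sum>F\<in>faces_of_dim n d. E F T (\<beta> F)) = (if G \<in> faces_of_dim n d then \<beta> G else 0)"
    if "\<forall>F\<in>faces_of_dim n d. \<beta> F \<in> Vring V F" "G \<subseteq> T" "card G \<le> d + 1" for \<beta> G
  proof -
    have "tr G (\<Sum>F\<in>faces_of_dim n d. E F T (\<beta> F)) = (\<Sum>F\<in>faces_of_dim n d. if F = G then \<beta> F else 0)"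
      unfolding tr_sum using key that by (intro sum.cong) auto
    also have "\<dots> = (if G \<in> faces_of_dim n d then \<beta> G else 0)"
      using finfd by (simp add: sum.delta)
    finally show ?thesis .
  qed
  have part1: "Vsub n V d = {w + u | w u. w \<in> Wsub n V E d \<and> u \<in> Vsub n V (d + 1)}"
  proof (intro equalityI subsetI)
    fix a assume a: "a \<in> Vsub n V d"
    then have aV: "a \<in> V" unfolding Vsub_def by auto
    define \<beta> where "\<beta> F = tr F a" for F
    have \<beta>R: "\<forall>F\<in>faces_of_dim n d. \<beta> F \<in> Vring V F"
    proof
      fix F assume F: "F \<in> faces_of_dim n d"
      have "\<beta> F \<in> Vf V F" using aV unfolding \<beta>_def Vf_def by auto
      moreover have "tr G (\<beta> F) = 0" if "G \<subset> F" for G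
      proof -
        have "finite F" using fin faceT[OF F] by auto
        then have "card G < card F" using that psubset_card_mono by auto
        then have "tr G a = 0" using vanish[OF a, of G] faceT[OF F] that assms(5) by auto
        then show ?thesis unfolding \<beta>_def using tr_tr[of G F a] that fin faceT[OF F] by auto
      qed
      ultimately show "\<beta> F \<in> Vring V F" unfolding Vring_def by auto
    qed
    define w where "w = (\<Sum>F\<in>faces_of_dim n d. E F T (\<beta> F))"
    have wW: "w \<in> Wsub n V E d" unfolding Wsub_def w_def T_def using \<beta>R by blast
    have wV: "w \<in> V" unfolding w_def using EinV \<beta>R by (intro Vsum) auto
    have "a - w \<in> Vsub n V (d + 1)"
    proof -
      have "tr G (a - w) = 0" if "G \<subseteq> T" "card G = d + 1" for G
      proof -
        have "G \<in> faces_of_dim n d" using that unfolding faces_of_dim_def T_def by auto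
        then show ?thesis unfolding tr_diff w_def using trsumE[OF \<beta>R, of G] that
          by (simp add: \<beta>_def)
      qed
      then show ?thesis unfolding Vsub_def T_def using Vdiff[OF aV wV] by auto
    qed
    then show "a \<in> {w + u | w u. w \<in> Wsub n V E d \<and> u \<in> Vsub n V (d + 1)}"
      using wW by (intro CollectI exI[of _ w] exI[of _ "a - w"]) auto
  next
    fix a assume "a \<in> {w + u | w u. w \<in> Wsub n V E d \<and> u \<in> Vsub n V (d + 1)}"
    then obtain \<beta> u where \<beta>R: "\<forall>F\<in>faces_of_dim n d. \<beta> F \<in> Vring V F"
      and u: "u \<in> Vsub n V (d + 1)" and a: "a = (\<Sum>F\<in>faces_of_dim n d. E F T (\<beta> F)) + u"
      unfolding Wsub_def T_def by blast
    have uV: "u \<in> V" using u unfolding Vsub_def by auto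
    have aV: "a \<in> V" unfolding a using EinV \<beta>R uV by (intro Vadd Vsum) auto
    have "tr G a = 0" if "G \<subseteq> T" "card G = d" for G
    proof -
      have "G \<notin> faces_of_dim n d" using that unfolding faces_of_dim_def by auto
      moreover have "tr G u = 0" using vanish[OF u, of G] that assms(5) by auto
      ultimately show ?thesis unfolding a tr_add using trsumE[OF \<beta>R, of G] that by simp
    qed
    then show "a \<in> Vsub n V d" unfolding Vsub_def T_def using aV by auto
  qed
  have part2: "(\<forall>F\<in>faces_of_dim n d. E F T (\<beta> F) = 0) \<and> u = 0"
    if \<beta>R: "\<forall>F\<in>faces_of_dim n d. \<beta> F \<in> Vring V F" and u: "u \<in> Vsub n V (d + 1)"
      and s: "(\<Sum>F\<in>faces_of_dim n d. E F T (\<beta> F)) + u = 0" for \<beta> u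
  proof -
    have b0: "\<beta> G = 0" if G: "G \<in> faces_of_dim n d" for G
    proof -
      have "tr G u = 0" using vanish[OF u, of G] faceT[OF G] assms(5) by auto
      moreover have "tr G ((\<Sum>F\<in>faces_of_dim n d. E F T (\<beta> F)) + u) = 0"
        using s tr_zero by simp
      ultimately show ?thesis unfolding tr_add using trsumE[OF \<beta>R, of G] faceT[OF G] G by simp
    qed
    have e0: "\<forall>F\<in>faces_of_dim n d. E F T (\<beta> F) = 0"
      using b0 E0 faceT by auto
    then have "(\<Sum>F\<in>faces_of_dim n d. E F T (\<beta> F)) = 0" by simp
    with s have "u = 0" by simp
    with e0 show ?thesis by simp
  qed
  show ?thesis using part1 part2 unfolding T_def by blast
qed

end
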